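(* Let $H=(V,E)$ be a hypergraph whose vertex set $V$ is a partition of $[n]$ into sets of cardinality at least $2$, and suppose $H$ is downward-closed (for every $e\in E$ and every $e'\subseteq e$ with $|e'|>1$, $e'\in E$). Let $D=\{\bar i_I\}_{I\in V}$ with $\bar i_I\in I$ for each $I\in V$. Then the coordinate projection $\operatorname{proj}_{\mathcal{J}^H_\le(D)}$, restricted to $\mathrm{MC}^H$, is a bijection from $\mathrm{MC}^H$ onto $\mathrm{MC}^H_\le(D)$.
   Context: Let $n$ be a positive integer, $[n]=\{1,\dots,n\}$. A hypergraph $H=(V,E)$ here has as vertex set $V$ a family of pairwise disjoint subsets of $[n]$, each of cardinality at least $2$, and hyperedge set $E$ consisting of subsets $e\subseteq V$ with $|e|\ge 2$. Write $L(V)=\{\{I\}: I\in V\}$. For a nonempty $e\subseteq V$, $\mathcal{J}^e$ denotes the family of sets $J\subseteq \bigcup_{I\in e} I$ with $|J\cap I|=1$ for every $I\in e$. Let $\mathcal{J}^H=\bigcup_{e\in L(V)\cup E}\mathcal{J}^e$. For a vector $w$ indexed by sets, write $w_i=w_{\{i\}}$ and $w(A)=\sum_{i\in A}w_i$. Let $\mathscr{S}^H=\{w\in\{0,1\}^{\mathcal{J}^H}: w(I)=1\ \forall I\in V;\ w_J=\prod_{i\in J}w_i\ \forall J\in\mathcal{J}^H, |J|>1\}$ and $\mathrm{MC}^H=\operatorname{conv}\mathscr{S}^H$. For $D$ as in the claim, $\mathcal{J}^H_\le(D)=\{J\in\mathcal{J}^H: J\subseteq[n]\setminus D\}$ and $\mathrm{MC}^H_\le(D)=\operatorname{conv}\{v\in\{0,1\}^{\mathcal{J}^H_\le(D)}: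 v(I\setminus D)\le 1\ \forall I\in V;\ v_J=\prod_{i\in J}v_i\ \forall J\in\mathcal{J}^H_\le(D), |J|>1\}$. *)

theory Defs
  imports Complex_Main
begin

text \<open>Vectors indexed by sets of naturals are functions nat set => real; a vector in
  R^X is represented by a function vanishing outside X.\<close>

definition conv_hull :: "('a \<Rightarrow> real) set \<Rightarrow> ('a \<Rightarrow> real) set" where
  "conv_hull S = {x. \<exists>(k::nat) c p. (\<forall>i<k. p i \<in> S \<and> c i \<ge> 0) \<and> (\<Sum>i<k. c i) = 1
                      \<and> x = (\<lambda>J. \<Sum>i<k. c i * p i J)}"

definition hg_vertices_partition :: "nat \<Rightarrow> nat set set \<Rightarrow> bool" where
  "hg_vertices_partition n V \<longleftrightarrow>
     (\<forall>I\<in>V. I \<subseteq> {1..n} \<and> card I \<ge> 2)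
     \<and> (\<forall>I\<in>V. \<forall>I'\<in>V. I \<noteq> I' \<longrightarrow> I \<inter> I' = {})
     \<and> \<Union>V = {1..n}"

definition hg_edges :: "nat set set \<Rightarrow> nat set set set \<Rightarrow> bool" where
  "hg_edges V E \<longleftrightarrow> (\<forall>e\<in>E. e \<subseteq> V \<and> card e \<ge> 2)"

definition downward_closed :: "nat set set set \<Rightarrow> bool" where
  "downward_closed E \<longleftrightarrow> (\<forall>e\<in>E. \<forall>e'. e' \<subseteq> e \<and> card e' > 1 \<longrightarrow> e' \<in> E)"

definition LV :: "nat set set \<Rightarrow> nat set set set" where
  "LV V = {{I} | I. I \<in> V}"

definition Jfam :: "nat set set \<Rightarrow> nat set set" where
  "Jfam e = {J. J \<subseteq> \<Union>e \<and> (\<forall>I\<in>e. card (J \<inter> I) = 1)}"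

definition JH :: "nat set set \<Rightarrow> nat set set set \<Rightarrow> nat set set" where
  "JH V E = (\<Union>e\<in>LV V \<union> E. Jfam e)"

definition wsum :: "(nat set \<Rightarrow> real) \<Rightarrow> nat set \<Rightarrow> real" where
  "wsum w A = (\<Sum>i\<in>A. w {i})"

definition SH :: "nat set set \<Rightarrow> nat set set set \<Rightarrow> (nat set \<Rightarrow> real) set" where
  "SH V E = {w. (\<forall>J. J \<notin> JH V E \<longrightarrow> w J = 0)
               \<and> (\<forall>J\<in>JH V E. w J \<in> {0,1})
               \<and> (\<forall>I\<in>V. wsum w I = 1)
               \<and> (\<forall>J\<in>JH V E. card J > 1 \<longrightarrow> w J = (\<Prod>i\<in>J. w {i}))}"

definition MC :: "nat set set \<Rightarrow> nat set set set \<Rightarrow> (nat set \<Rightarrow> real) set" where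
  "MC V E = conv_hull (SH V E)"

definition JH_le :: "nat \<Rightarrow> nat set set \<Rightarrow> nat set set set \<Rightarrow> nat set \<Rightarrow> nat set set" where
  "JH_le n V E D = {J\<in>JH V E. J \<subseteq> {1..n} - D}"

definition SH_le :: "nat \<Rightarrow> nat set set \<Rightarrow> nat set set set \<Rightarrow> nat set \<Rightarrow> (nat set \<Rightarrow> real) set" where
  "SH_le n V E D = {v. (\<forall>J. J \<notin> JH_le n V E D \<longrightarrow> v J = 0)
               \<and> (\<forall>J\<in>JH_le n V E D. v J \<in> {0,1})
               \<and> (\<forall>I\<in>V. wsum v (I - D) \<le> 1)
               \<and> (\<forall>J\<in>JH_le n V E D. card J > 1 \<longrightarrow> v J = (\<Prod>i\<in>J. v {i}))}"

definition MC_le :: "nat \<Rightarrow> nat set set \<Rightarrow> nat set set set \<Rightarrow> nat set \<Rightarrow> (nat set \<Rightarrow> real) set" where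
  "MC_le n V E D = conv_hull (SH_le n V E D)"

definition proj :: "nat set set \<Rightarrow> (nat set \<Rightarrow> real) \<Rightarrow> (nat set \<Rightarrow> real)" where
  "proj X w = (\<lambda>J. if J \<in> X then w J else 0)"

end

theory Submission imports Defs begin

lemma conv_zero:
  assumes "x \<in> conv_hull S" "\<forall>p\<in>S. p J = 0"
  shows "x J = 0"
  using assms unfolding conv_hull_def by (auto intro!: sum.neutral)

lemma conv_affine:
  assumes "x \<in> conv_hull S"
    and "\<forall>p\<in>S. (\<Sum>k\<in>F. p (g k)) = (\<Sum>k\<in>G. p (h k)) + c"
  shows "(\<Sum>k\<in>F. x (g k)) = (\<Sum>k\<in>G. x (h k)) + c"
proof -
  obtain m :: nat and p cc where H: "\<forall>i<m. p i \<in> S \<and> cc i \<ge> 0" "(\<Sum>i<m. cc i) = 1"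
    "x = (\<lambda>J. \<Sum>i<m. cc i * p i J)"
    using assms(1) unfolding conv_hull_def by blast
  have "(\<Sum>k\<in>F. x (g k)) = (\<Sum>i<m. cc i * (\<Sum>k\<in>F. p i (g k)))"
    by (simp add: H(3) sum_distrib_left sum.swap[of _ F])
  also have "\<dots> = (\<Sum>i<m. cc i * ((\<Sum>k\<in>G. p i (h k)) + c))"
    using H(1) assms(2) by (intro sum.cong) auto
  also have "\<dots> = (\<Sum>i<m. cc i * (\<Sum>k\<in>G. p i (h k))) + (\<Sum>i<m. cc i) * c"
    by (simp add: distrib_left sum.distrib sum_distrib_right)
  also have "\<dots> = (\<Sum>k\<in>G. x (h k)) + c"
    by (simp add: H(2,3) sum_distrib_left sum.swap[of _ G])
  finally show ?thesis .
qed

lemma proj_conv: "proj X ` conv_hull S = conv_hull (proj X ` S)"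
proof
  show "proj X ` conv_hull S \<subseteq> conv_hull (proj X ` S)"
  proof
    fix y assume "y \<in> proj X ` conv_hull S"
    then obtain x where x: "x \<in> conv_hull S" "y = proj X x" by blast
    obtain m :: nat and p cc where H: "\<forall>i<m. p i \<in> S \<and> cc i \<ge> 0" "(\<Sum>i<m. cc i) = 1"
      "x = (\<lambda>J. \<Sum>i<m. cc i * p i J)"
      using x(1) unfolding conv_hull_def by blast
    have "y = (\<lambda>J. \<Sum>i<m. cc i * proj X (p i) J)"
      using x(2) H(3) by (auto simp: proj_def)
    then show "y \<in> conv_hull (proj X ` S)"
      unfolding conv_hull_def using H(1,2)
      by (intro CollectI exI[of _ m] exI[of _ cc] exI[of _ "\<lambda>i. proj X (p i)"]) auto
  qed
next
  show "conv_hull (proj X ` S) \<subseteq> proj X ` conv_hull S"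
  proof
    fix y assume "y \<in> conv_hull (proj X ` S)"
    then obtain m :: nat and cc q where H: "\<forall>i<m. q i \<in> proj X ` S \<and> cc i \<ge> 0" "(\<Sum>i<m. cc i) = 1"
      "y = (\<lambda>J. \<Sum>i<m. cc i * q i J)"
      unfolding conv_hull_def by blast
    define p where "p i = (SOME s. s \<in> S \<and> q i = proj X s)" for i
    have p: "p i \<in> S \<and> q i = proj X (p i)" if hi: "i < m" for i
    proof -
      obtain s where "s \<in> S" "q i = proj X s" using H(1) hi by blast
      then show ?thesis unfolding p_def by (rule someI[where P="\<lambda>s. s \<in> S \<and> q i = proj X s", OF conjI])
    qed
    define x where "x = (\<lambda>J. \<Sum>i<m. cc i * p i J)"
    have "x \<in> conv_hull S" unfolding conv_hull_def x_def using H(1,2) p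
      by (intro CollectI exI[of _ m] exI[of _ cc] exI[of _ p]) auto
    moreover have "y = proj X x"
    proof
      fix J show "y J = proj X x J"
        unfolding x_def H(3) using p by (auto simp: proj_def intro!: sum.cong)
    qed
    ultimately show "y \<in> proj X ` conv_hull S" by blast
  qed
qed


lemma prod_ind:
  assumes "finite J"
  shows "(\<Prod>j\<in>J. if j \<in> C then (1::real) else 0) = (if J \<subseteq> C then 1 else 0)"
proof (cases "J \<subseteq> C")
  case True then show ?thesis by (auto intro!: prod.neutral)
next
  case False
  then obtain j where "j \<in> J" "j \<notin> C" by blast
  then show ?thesis using assms False by (auto simp: prod_zero_iff)
qed

locale hgl =
  fixes n :: nat and V :: "nat set set" and E :: "nat set set set" and d :: "nat set \<Rightarrow> nat"
  assumes part: "hg_vertices_partition n V" and edg: "hg_edges V E" and dc: "downward_closed E"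
    and dI: "\<forall>I\<in>V. d I \<in> I"
begin

lemma V_sub: "I \<in> V \<Longrightarrow> I \<subseteq> {1..n}"
  using part unfolding hg_vertices_partition_def by auto

lemma finI: "I \<in> V \<Longrightarrow> finite I"
  using V_sub finite_subset by blast

lemma finV: "finite V"
proof -
  have "V \<subseteq> Pow {1..n}" using V_sub by auto
  then show ?thesis using finite_subset by blast
qed

lemma disj: "I \<in> V \<Longrightarrow> I' \<in> V \<Longrightarrow> x \<in> I \<Longrightarrow> x \<in> I' \<Longrightarrow> I = I'"
  using part unfolding hg_vertices_partition_def by blast

lemma cover: "i \<in> {1..n} \<Longrightarrow> \<exists>I\<in>V. i \<in> I"
  using part unfolding hg_vertices_partition_def by blast

lemma D_int: "I \<in> V \<Longrightarrow> I \<inter> d ` V = {d I}"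
  using dI disj by blast

lemma single_JH: "I \<in> V \<Longrightarrow> i \<in> I \<Longrightarrow> {i} \<in> JH V E"
  unfolding JH_def LV_def Jfam_def
  by (rule UN_I[of "{I}"]) auto

lemma single_JH': "i \<in> {1..n} \<Longrightarrow> {i} \<in> JH V E"
  using cover single_JH by blast

lemma JH_cases:
  assumes "J \<in> JH V E"
  shows "(\<exists>I\<in>V. \<exists>i\<in>I. J = {i}) \<or> (\<exists>e\<in>E. J \<in> Jfam e)"
proof -
  obtain e where e: "e \<in> LV V \<union> E" "J \<in> Jfam e" using assms unfolding JH_def by blast
  show ?thesis
  proof (cases "e \<in> E")
    case True then show ?thesis using e by blast
  next
    case False
    then obtain I where I: "I \<in> V" "e = {I}" using e unfolding LV_def by blast
    then have "J \<subseteq> I" "card J = 1" using e(2) unfolding Jfam_def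
      by (auto simp: Int_absorb2)
    then show ?thesis using I by (metis card_1_singletonE insert_subset)
  qed
qed

lemma JH_sub:
  assumes "J \<in> JH V E"
  shows "J \<subseteq> {1..n}" "J \<noteq> {}" "finite J"
proof -
  have A: "J \<subseteq> {1..n} \<and> J \<noteq> {}"
    using JH_cases[OF assms]
  proof
    assume "\<exists>I\<in>V. \<exists>i\<in>I. J = {i}" then show ?thesis using V_sub by blast
  next
    assume "\<exists>e\<in>E. J \<in> Jfam e"
    then obtain e where e: "e \<in> E" "J \<in> Jfam e" by blast
    have "e \<subseteq> V" "card e \<ge> 2" using edg e(1) unfolding hg_edges_def by auto
    then obtain I where "I \<in> e" by fastforce
    then have "card (J \<inter> I) = 1" using e(2) unfolding Jfam_def by auto
    then have "J \<noteq> {}" by auto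
    moreover have "J \<subseteq> {1..n}" using e(2) \<open>e \<subseteq> V\<close> V_sub unfolding Jfam_def by blast
    ultimately show ?thesis by blast
  qed
  then show "J \<subseteq> {1..n}" "J \<noteq> {}" by auto
  then show "finite J" using finite_subset by blast
qed

lemma SH_prod:
  assumes "w \<in> SH V E" "J \<in> JH V E"
  shows "w J = (\<Prod>j\<in>J. w {j})"
proof (cases "card J > 1")
  case True then show ?thesis using assms unfolding SH_def by auto
next
  case False
  have "card J \<noteq> 0" using JH_sub[OF assms(2)] by auto
  then have "card J = 1" using False by linarith
  then obtain j where "J = {j}" using card_1_singletonE by blast
  then show ?thesis by simp
qed

lemma decomp:
  assumes J: "J \<in> JH V E" and I: "I \<in> V" and dJ: "d I \<in> J"
  shows "J = {d I} \<or> (J - {d I} \<in> JH V E \<and> (J - {d I}) \<inter> I = {}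
            \<and> (\<forall>i\<in>I. insert i (J - {d I}) \<in> JH V E))"
  using JH_cases[OF J]
proof
  assume "\<exists>I\<in>V. \<exists>i\<in>I. J = {i}" then show ?thesis using dJ by blast
next
  assume "\<exists>e\<in>E. J \<in> Jfam e"
  then obtain e where e: "e \<in> E" "J \<in> Jfam e" by blast
  have eV: "e \<subseteq> V" and ce: "card e \<ge> 2" using edg e(1) unfolding hg_edges_def by auto
  have fe: "finite e" using eV finV finite_subset by blast
  have dIV: "d I \<in> I" using dI I by blast
  obtain I' where "I' \<in> e" "d I \<in> I'" using e(2) dJ unfolding Jfam_def by blast
  then have Ie: "I \<in> e" using disj[OF I _ dIV] eV by blast
  have c1: "card (J \<inter> I) = 1" using e(2) Ie unfolding Jfam_def by auto
  have JI: "J \<inter> I = {d I}" using c1 dJ dIV by (metis IntI card_1_singletonE singletonD)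
  define J0 where "J0 = J - {d I}"
  have J0I: "J0 \<inter> I = {}" using JI unfolding J0_def by blast
  have oth: "J0 \<inter> I' = J \<inter> I'" if "I' \<in> e" "I' \<noteq> I" for I'
  proof -
    have "d I \<notin> I'" using disj[OF I _ dIV] that eV by blast
    then show ?thesis unfolding J0_def by blast
  qed
  define e' where "e' = e - {I}"
  have ce': "card e' \<ge> 1" using ce fe Ie unfolding e'_def by auto
  have J0e': "J0 \<in> Jfam e'"
  proof -
    have "J0 \<subseteq> \<Union>e'"
    proof
      fix x assume x: "x \<in> J0"
      then obtain I'' where "I'' \<in> e" "x \<in> I''" using e(2) unfolding Jfam_def J0_def by blast
      moreover have "I'' \<noteq> I" using x J0I \<open>x \<in> I''\<close> by blast
      ultimately show "x \<in> \<Union>e'" unfolding e'_def by blast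
    qed
    moreover have "\<forall>I'\<in>e'. card (J0 \<inter> I') = 1"
      using oth e(2) unfolding e'_def Jfam_def by auto
    ultimately show ?thesis unfolding Jfam_def by blast
  qed
  have e'E: "e' \<in> LV V \<union> E"
  proof (cases "card e' = 1")
    case True
    then obtain I' where "e' = {I'}" using card_1_singletonE by blast
    moreover have "I' \<in> V" using \<open>e' = {I'}\<close> eV unfolding e'_def by blast
    ultimately show ?thesis unfolding LV_def by blast
  next
    case False
    then have "card e' > 1" using ce' by linarith
    moreover have "e' \<subseteq> e" unfolding e'_def by blast
    ultimately show ?thesis using dc e(1) unfolding downward_closed_def by blast
  qed
  have J0JH: "J0 \<in> JH V E" using e'E J0e' unfolding JH_def by blast
  have ins: "insert i J0 \<in> JH V E" if i: "i \<in> I" for i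
  proof -
    have "insert i J0 \<subseteq> \<Union>e" using e(2) Ie i unfolding Jfam_def J0_def by blast
    moreover have "card (insert i J0 \<inter> I') = 1" if I': "I' \<in> e" for I'
    proof (cases "I' = I")
      case True
      then have "insert i J0 \<inter> I' = {i}" using J0I i by blast
      then show ?thesis by simp
    next
      case False
      then have "i \<notin> I'" using disj[OF I _ i] I' eV by blast
      then have "insert i J0 \<inter> I' = J \<inter> I'" using oth[OF I' False] by blast
      then show ?thesis using e(2) I' unfolding Jfam_def by auto
    qed
    ultimately have "insert i J0 \<in> Jfam e" unfolding Jfam_def by blast
    then show ?thesis using e(1) unfolding JH_def by blast
  qed
  show ?thesis using J0JH J0I ins unfolding J0_def by blast
qed

abbreviation "X \<equiv> JH_le n V E (d ` V)"

lemma SH_id1: "w \<in> SH V E \<Longrightarrow> I \<in> V \<Longrightarrow> (\<Sum>i\<in>I. w {i}) = (\<Sum>k\<in>{}. w (id k)) + 1"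
  unfolding SH_def wsum_def by auto

lemma SH_id2:
  assumes w: "w \<in> SH V E" and J0: "J0 \<in> JH V E" and I: "I \<in> V" and J0I: "J0 \<inter> I = {}"
    and ins: "\<forall>i\<in>I. insert i J0 \<in> JH V E"
  shows "(\<Sum>i\<in>I. w (insert i J0)) = (\<Sum>k\<in>{J0}. w (id k)) + 0"
proof -
  have "w (insert i J0) = w {i} * w J0" if i: "i \<in> I" for i
  proof -
    have "i \<notin> J0" using J0I i by blast
    then have "w (insert i J0) = w {i} * (\<Prod>j\<in>J0. w {j})"
      using SH_prod[OF w ins[rule_format, OF i]] JH_sub(3)[OF J0] by simp
    then show ?thesis using SH_prod[OF w J0] by simp
  qed
  then have "(\<Sum>i\<in>I. w (insert i J0)) = (\<Sum>i\<in>I. w {i}) * w J0"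
    by (simp add: sum_distrib_right)
  also have "\<dots> = w J0" using SH_id1[OF w I] by simp
  finally show ?thesis by simp
qed

lemma MC_zero: "x \<in> MC V E \<Longrightarrow> J \<notin> JH V E \<Longrightarrow> x J = 0"
  unfolding MC_def by (rule conv_zero) (auto simp: SH_def)

lemma inj_pt:
  assumes x: "x \<in> MC V E" and y: "y \<in> MC V E" and pxy: "proj X x = proj X y"
  shows "x J = y J"
proof (induction "card (J \<inter> d ` V)" arbitrary: J rule: less_induct)
  case less
  show ?case
  proof (cases "J \<in> JH V E")
    case False
    then show ?thesis using MC_zero[OF x False] MC_zero[OF y False] by simp
  next
    case JJH: True
    have fJ: "finite J" using JH_sub(3)[OF JJH] .
    show ?thesis
    proof (cases "J \<inter> d ` V = {}")
      case True
      then have "J \<in> X" using JJH JH_sub(1)[OF JJH] unfolding JH_le_def by blast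
      then show ?thesis using fun_cong[OF pxy, of J] unfolding proj_def by simp
    next
      case False
      then obtain I where I: "I \<in> V" "d I \<in> J" by blast
      have dIV: "d I \<in> I" using dI I(1) by blast
      have cJ: "card (J \<inter> d ` V) > 0" using False fJ by (simp add: card_gt_0_iff)
      have notD: "i \<notin> d ` V" if "i \<in> I - {d I}" for i using D_int[OF I(1)] that by blast
      have finI': "finite I" using finI I(1) .
      from decomp[OF JJH I(1) I(2)]
      show ?thesis
      proof
        assume Jd: "J = {d I}"
        have eqs: "x {i} = y {i}" if "i \<in> I - {d I}" for i
        proof -
          have "{i} \<inter> d ` V = {}" using notD[OF that] by blast
          then show ?thesis using less[of "{i}"] cJ by simp
        qed
        have hx: "(\<Sum>i\<in>I. x {i}) = (\<Sum>k\<in>{}. x (id k)) + 1"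
          using conv_affine[OF x[unfolded MC_def], where F=I and g="\<lambda>i. {i}" and G="{}" and h=id and c=1] SH_id1 I(1) by blast
        have hy: "(\<Sum>i\<in>I. y {i}) = (\<Sum>k\<in>{}. y (id k)) + 1"
          using conv_affine[OF y[unfolded MC_def], where F=I and g="\<lambda>i. {i}" and G="{}" and h=id and c=1] SH_id1 I(1) by blast
        have "x {d I} + (\<Sum>i\<in>I - {d I}. x {i}) = y {d I} + (\<Sum>i\<in>I - {d I}. y {i})"
          using hx hy sum.remove[OF finI' dIV, of "\<lambda>i. x {i}"] sum.remove[OF finI' dIV, of "\<lambda>i. y {i}"]
          by simp
        moreover have "(\<Sum>i\<in>I - {d I}. x {i}) = (\<Sum>i\<in>I - {d I}. y {i})"
          using eqs by (rule sum.cong[OF refl])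
        ultimately show ?thesis using Jd by simp
      next
        assume H: "J - {d I} \<in> JH V E \<and> (J - {d I}) \<inter> I = {} \<and> (\<forall>i\<in>I. insert i (J - {d I}) \<in> JH V E)"
        define J0 where "J0 = J - {d I}"
        have H0: "J0 \<in> JH V E" "J0 \<inter> I = {}" "\<forall>i\<in>I. insert i J0 \<in> JH V E"
          using H unfolding J0_def by auto
        have JJ0: "insert (d I) J0 = J" using I(2) unfolding J0_def by blast
        have small: "card (J0 \<inter> d ` V) < card (J \<inter> d ` V)"
        proof -
          have "J0 \<inter> d ` V = (J \<inter> d ` V) - {d I}" unfolding J0_def by blast
          moreover have "d I \<in> J \<inter> d ` V" using I by blast
          ultimately show ?thesis using fJ by (metis card_Diff1_less finite_Int)
        qed
        have e0: "x J0 = y J0" using less[OF small] .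
        have eqs: "x (insert i J0) = y (insert i J0)" if "i \<in> I - {d I}" for i
        proof -
          have "insert i J0 \<inter> d ` V = J0 \<inter> d ` V" using notD[OF that] by blast
          then show ?thesis using less[of "insert i J0"] small by simp
        qed
        have hx: "(\<Sum>i\<in>I. x (insert i J0)) = (\<Sum>k\<in>{J0}. x (id k)) + 0"
          using conv_affine[OF x[unfolded MC_def], where F=I and g="\<lambda>i. insert i J0" and G="{J0}" and h=id and c=0]
            SH_id2[OF _ H0(1) I(1) H0(2) H0(3)] by blast
        have hy: "(\<Sum>i\<in>I. y (insert i J0)) = (\<Sum>k\<in>{J0}. y (id k)) + 0"
          using conv_affine[OF y[unfolded MC_def], where F=I and g="\<lambda>i. insert i J0" and G="{J0}" and h=id and c=0]
            SH_id2[OF _ H0(1) I(1) H0(2) H0(3)] by blast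
        have "x J + (\<Sum>i\<in>I - {d I}. x (insert i J0)) = y J + (\<Sum>i\<in>I - {d I}. y (insert i J0))"
          using hx hy e0 JJ0 sum.remove[OF finI' dIV, of "\<lambda>i. x (insert i J0)"]
            sum.remove[OF finI' dIV, of "\<lambda>i. y (insert i J0)"]
          by simp
        moreover have "(\<Sum>i\<in>I - {d I}. x (insert i J0)) = (\<Sum>i\<in>I - {d I}. y (insert i J0))"
          using eqs by (rule sum.cong[OF refl])
        ultimately show ?thesis by simp
      qed
    qed
  qed
qed

lemma single_X: "j \<in> {1..n} \<Longrightarrow> j \<notin> d ` V \<Longrightarrow> {j} \<in> X"
  using single_JH' unfolding JH_le_def by auto

lemma X_JH: "J \<in> X \<Longrightarrow> J \<in> JH V E"
  unfolding JH_le_def by auto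

lemma proj_SH_sub: "proj X ` SH V E \<subseteq> SH_le n V E (d ` V)"
proof
  fix v assume "v \<in> proj X ` SH V E"
  then obtain w where w: "w \<in> SH V E" "v = proj X w" by blast
  have v1: "\<forall>J. J \<notin> X \<longrightarrow> v J = 0" using w(2) unfolding proj_def by auto
  have v2: "\<forall>J\<in>X. v J \<in> {0,1}" using w X_JH unfolding proj_def SH_def by auto
  have v3: "wsum v (I - d ` V) \<le> 1" if I: "I \<in> V" for I
  proof -
    have "wsum v (I - d ` V) = (\<Sum>i\<in>I - d ` V. w {i})"
      unfolding wsum_def w(2) proj_def using single_X V_sub[OF I] by (intro sum.cong) auto
    also have "\<dots> \<le> (\<Sum>i\<in>I. w {i})"
    proof (rule sum_mono2[OF finI[OF I]])
      fix b assume "b \<in> I - (I - d ` V)"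
      then have "{b} \<in> JH V E" using single_JH[OF I] by blast
      then have "w {b} \<in> {0,1}" using w(1) unfolding SH_def by blast
      then show "0 \<le> w {b}" by auto
    qed auto
    also have "\<dots> = 1" using w(1) I unfolding SH_def wsum_def by auto
    finally show ?thesis .
  qed
  have v4: "v J = (\<Prod>j\<in>J. v {j})" if J: "J \<in> X" "card J > 1" for J
  proof -
    have "v J = w J" using J w(2) unfolding proj_def by simp
    also have "\<dots> = (\<Prod>j\<in>J. w {j})" using SH_prod[OF w(1) X_JH[OF J(1)]] .
    also have "\<dots> = (\<Prod>j\<in>J. v {j})"
    proof (rule prod.cong[OF refl])
      fix j assume "j \<in> J"
      then have "{j} \<in> X" using J(1) X_JH[OF J(1)] JH_sub(1) single_X unfolding JH_le_def by blast
      then show "w {j} = v {j}" using w(2) unfolding proj_def by simp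
    qed
    finally show ?thesis .
  qed
  show "v \<in> SH_le n V E (d ` V)" unfolding SH_le_def using v1 v2 v3 v4 by blast
qed

lemma proj_SH_sup: "SH_le n V E (d ` V) \<subseteq> proj X ` SH V E"
proof
  fix v assume v: "v \<in> SH_le n V E (d ` V)"
  have v01: "v {i} \<in> {0,1}" if "i \<in> {1..n}" "i \<notin> d ` V" for i
    using v single_X[OF that] unfolding SH_le_def by blast
  have uniq: "i = j" if I: "I \<in> V" and ij: "i \<in> I - d ` V" "j \<in> I - d ` V" "v {i} = 1" "v {j} = 1" for I i j
  proof (rule ccontr)
    assume "i \<noteq> j"
    have "(\<Sum>k\<in>{i,j}. v {k}) \<le> (\<Sum>k\<in>I - d ` V. v {k})"
    proof (rule sum_mono2)
      show "finite (I - d ` V)" using finI[OF I] by simp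
      show "{i, j} \<subseteq> I - d ` V" using ij by blast
      fix b assume "b \<in> I - d ` V - {i, j}"
      then have "v {b} \<in> {0,1}" using v01 V_sub[OF I] by blast
      then show "0 \<le> v {b}" by auto
    qed
    moreover have "(\<Sum>k\<in>I - d ` V. v {k}) \<le> 1" using v I unfolding SH_le_def wsum_def by blast
    ultimately show False using \<open>i \<noteq> j\<close> ij by simp
  qed
  define \<sigma> where "\<sigma> I = (if \<exists>i\<in>I - d ` V. v {i} = 1 then (SOME i. i \<in> I - d ` V \<and> v {i} = 1) else d I)" for I
  have someP: "\<sigma> I \<in> I - d ` V \<and> v {\<sigma> I} = 1" if ex: "\<exists>i\<in>I - d ` V. v {i} = 1" for I
  proof -
    have eq: "\<sigma> I = (SOME i. i \<in> I - d ` V \<and> v {i} = 1)" unfolding \<sigma>_def using ex by simp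
    have e2: "\<exists>i. i \<in> I - d ` V \<and> v {i} = 1" using ex by blast
    have "(SOME i. i \<in> I - d ` V \<and> v {i} = 1) \<in> I - d ` V \<and> v {SOME i. i \<in> I - d ` V \<and> v {i} = 1} = 1"
      by (rule someI_ex[OF e2])
    then show ?thesis unfolding eq .
  qed
  have \<sigma>I: "\<sigma> I \<in> I" if "I \<in> V" for I
  proof (cases "\<exists>i\<in>I - d ` V. v {i} = 1")
    case True
    then have "\<sigma> I \<in> I - d ` V \<and> v {\<sigma> I} = 1" using someP by blast
    then show ?thesis by blast
  next
    case False then show ?thesis unfolding \<sigma>_def using dI that by simp
  qed
  define C where "C = \<sigma> ` V"
  have IC: "I \<inter> C = {\<sigma> I}" if I: "I \<in> V" for I
    using \<sigma>I disj I unfolding C_def by blast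
  have Cv: "(j \<in> C) = (v {j} = 1)" if j: "j \<in> {1..n}" "j \<notin> d ` V" for j
  proof -
    obtain I where I: "I \<in> V" "j \<in> I" using cover j(1) by blast
    have "(j \<in> C) = (j \<in> I \<inter> C)" using I(2) by blast
    also have "\<dots> = (\<sigma> I = j)" using IC[OF I(1)] by auto
    also have "\<dots> = (v {j} = 1)"
    proof
      assume s: "\<sigma> I = j"
      show "v {j} = 1"
      proof (cases "\<exists>i\<in>I - d ` V. v {i} = 1")
        case True
        then have "\<sigma> I \<in> I - d ` V \<and> v {\<sigma> I} = 1" using someP by blast
        then show ?thesis using s by simp
      next
        case False then have "\<sigma> I = d I" unfolding \<sigma>_def by simp
        then show ?thesis using s j I by blast
      qed
    next
      assume vj: "v {j} = 1"
      then have ex: "\<exists>i\<in>I - d ` V. v {i} = 1" using I j by blast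
      then have "\<sigma> I \<in> I - d ` V \<and> v {\<sigma> I} = 1" using someP by blast
      then show "\<sigma> I = j" using uniq[OF I(1), of "\<sigma> I" j] vj I j by blast
    qed
    finally show ?thesis .
  qed
  define w where "w J = (if J \<in> JH V E \<and> J \<subseteq> C then 1 else (0::real))" for J
  have wsing: "w {i} = (if i \<in> C then 1 else 0)" if "i \<in> {1..n}" for i
    using single_JH'[OF that] unfolding w_def by simp
  have wprod: "w J = (\<Prod>j\<in>J. w {j})" if J: "J \<in> JH V E" for J
  proof -
    have "(\<Prod>j\<in>J. w {j}) = (\<Prod>j\<in>J. if j \<in> C then 1 else 0)"
      using wsing JH_sub(1)[OF J] by (intro prod.cong) auto
    also have "\<dots> = (if J \<subseteq> C then 1 else 0)" using prod_ind[OF JH_sub(3)[OF J]] .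
    finally show ?thesis unfolding w_def using J by simp
  qed
  have wsum1: "wsum w I = 1" if I: "I \<in> V" for I
  proof -
    have "wsum w I = (\<Sum>i\<in>I. if i = \<sigma> I then 1 else 0)"
      unfolding wsum_def
    proof (intro sum.cong refl)
      fix i assume i: "i \<in> I"
      then have "w {i} = (if i \<in> C then 1 else 0)" using wsing V_sub[OF I] by blast
      moreover have "(i \<in> C) = (i = \<sigma> I)" using IC[OF I] i by blast
      ultimately show "w {i} = (if i = \<sigma> I then 1 else 0)" by simp
    qed
    also have "\<dots> = 1" using finI[OF I] \<sigma>I[OF I] by simp
    finally show ?thesis .
  qed
  have w0: "\<forall>J. J \<notin> JH V E \<longrightarrow> w J = 0" by (simp add: w_def)
  have w01: "\<forall>J\<in>JH V E. w J \<in> {0,1}" by (simp add: w_def)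
  have wSH: "w \<in> SH V E" unfolding SH_def using w0 w01 wprod wsum1 by blast
  have vz: "\<forall>J. J \<notin> X \<longrightarrow> v J = 0" using v unfolding SH_le_def by blast
  have vp: "\<forall>J\<in>X. card J > 1 \<longrightarrow> v J = (\<Prod>j\<in>J. v {j})" using v unfolding SH_le_def by blast
  have "v = proj X w"
  proof
    fix J
    show "v J = proj X w J"
    proof (cases "J \<in> X")
      case False then show ?thesis using vz unfolding proj_def by simp
    next
      case True
      have JJ: "J \<in> JH V E" "J \<subseteq> {1..n} - d ` V" using True unfolding JH_le_def by auto
      have fJ: "finite J" using JH_sub(3)[OF JJ(1)] .
      have "v J = (\<Prod>j\<in>J. v {j})"
      proof (cases "card J > 1")
        case True then show ?thesis using vp \<open>J \<in> X\<close> by blast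
      next
        case False
        have "card J \<noteq> 0" using JH_sub(2)[OF JJ(1)] fJ by auto
        then have "card J = 1" using False by linarith
        then obtain j where "J = {j}" using card_1_singletonE by blast
        then show ?thesis by simp
      qed
      also have "\<dots> = (\<Prod>j\<in>J. if j \<in> C then 1 else 0)"
      proof (rule prod.cong[OF refl])
        fix j assume "j \<in> J"
        then have j: "j \<in> {1..n}" "j \<notin> d ` V" using JJ(2) by auto
        show "v {j} = (if j \<in> C then 1 else 0)" using v01[OF j] Cv[OF j] by auto
      qed
      also have "\<dots> = w J" using prod_ind[OF fJ] JJ(1) by (simp add: w_def)
      finally show ?thesis using True unfolding proj_def by simp
    qed
  qed
  then show "v \<in> proj X ` SH V E" using wSH by blast
qed

lemma main: "bij_betw (proj X) (MC V E) (MC_le n V E (d ` V))"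
  unfolding bij_betw_def
proof
  show "inj_on (proj X) (MC V E)"
    by (rule inj_onI, rule ext, rule inj_pt)
  have "proj X ` SH V E = SH_le n V E (d ` V)" using proj_SH_sub proj_SH_sup by blast
  then show "proj X ` MC V E = MC_le n V E (d ` V)"
    unfolding MC_def MC_le_def proj_conv by simp
qed

end

theorem proposition3p4:
  fixes n :: nat and V :: "nat set set" and E :: "nat set set set" and d :: "nat set \<Rightarrow> nat"
  assumes "n > 0"
    and "hg_vertices_partition n V"
    and "hg_edges V E"
    and "downward_closed E"
    and "\<forall>I\<in>V. d I \<in> I"
  shows "bij_betw (proj (JH_le n V E (d ` V))) (MC V E) (MC_le n V E (d ` V))"
proof -
  interpret hgl n V E d using assms(2-5) by unfold_locales
  show ?thesis using main .
qed

end
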